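(* For $r\ge1$ and $1\le l\le r$, \[ \frac{\partial}{\partial a_l}C_{1,r}(a_1,\dots,a_r)=-\sum_{k=l}^rC_{1,k-1}(a_1,\dots,a_{k-1})\,C_{1,r-k}(a_{k+1},\dots,a_r). \] Consequently, with $C_{1,r}(a)=C_{1,r}(a,\dots,a)$, \[ C_{1,r}'(a)=-\sum_{l=1}^r\sum_{k=l}^rC_{1,k-1}(a)C_{1,r-k}(a)=-\sum_{k=1}^rk\,C_{1,r-k}(a)\,C_{1,k-1}(a). \]
   Context: Bernoulli polynomials $B_n(a)$: $\sum_{n\ge0}B_n(a)x^n/n!=xe^{ax}/(e^x-1)$. For $r\ge1$, $S_r=\{(n_1,\dots,n_r)\in\mathbb Z_{\ge0}^r: n_1+\dots+n_r=r,\ n_{j+1}+\dots+n_r\le r-j\ (1\le j<r)\}$ and $C_{1,r}(a_1,\dots,a_r)=(-1)^r\sum_{(n_1,\dots,n_r)\in S_r}\prod_{j=1}^r\frac{B_{n_j}(a_j)}{n_j!}$. By convention $C_{1,0}()=C_{1,0}(a)=1$. *)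

theory Defs
  imports "HOL-Analysis.Analysis" "HOL-Computational_Algebra.Formal_Power_Series"
begin

definition bernpoly :: "nat \<Rightarrow> real \<Rightarrow> real" where
  "bernpoly n a = fact n * fps_nth (fps_X * fps_exp a / (fps_exp 1 - 1)) n"

text \<open>The index set S_r, tuples represented as lists of length r
  (list position j-1 holds n_j).\<close>
definition S_set :: "nat \<Rightarrow> nat list set" where
  "S_set r = {ns. length ns = r \<and> sum_list ns = r \<and>
      (\<forall>j. 1 \<le> j \<and> j < r \<longrightarrow> sum_list (drop j ns) \<le> r - j)}"

definition C1 :: "real list \<Rightarrow> real" where
  "C1 as = (-1) ^ length as *
     (\<Sum>ns\<in>S_set (length as). \<Prod>j<length as. bernpoly (ns ! j) (as ! j) / fact (ns ! j))"

definition C1diag :: "nat \<Rightarrow> real \<Rightarrow> real" where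
  "C1diag r a = C1 (replicate r a)"

end

theory Submission
  imports Defs
begin


definition G :: "real fps" where "G = fps_X / (fps_exp 1 - 1)"

lemma sub1: "subdegree (fps_exp (1::real) - 1) = 1"
  by (rule subdegreeI) auto

lemma dvdX: "(fps_exp (1::real) - 1) dvd fps_X"
proof -
  have ne: "fps_exp (1::real) - 1 \<noteq> 0"
    proof
    assume "fps_exp (1::real) - 1 = 0"
    hence "fps_nth (fps_exp (1::real) - 1) 1 = 0" by simp
    thus False by simp
  qed
  show ?thesis using fps_dvd_iff[OF ne] sub1 by simp
qed

lemma bern_eq: "fps_X * fps_exp a / (fps_exp 1 - 1) = fps_exp a * G"
  unfolding G_def by (metis div_mult_swap dvdX mult.commute)

lemma G0: "fps_nth G 0 = 1"
proof -
  have "G * (fps_exp 1 - 1) = fps_X" unfolding G_def using dvdX by simp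
  hence "fps_nth (G * (fps_exp 1 - 1)) 1 = 1" by simp
  thus ?thesis by (simp add: fps_mult_nth)
qed

definition gb :: "nat \<Rightarrow> real \<Rightarrow> real" where
  "gb n t = (\<Sum>i=0..n. t^i / fact i * fps_nth G (n - i))"

lemma bern_gb: "bernpoly n t / fact n = gb n t"
  unfolding bernpoly_def bern_eq gb_def by (simp add: fps_mult_nth)

lemma gb0: "gb 0 t = 1"
  by (simp add: gb_def G0)

lemma gb_deriv: "(gb n has_real_derivative (if n = 0 then 0 else gb (n - 1) t)) (at t)"
proof -
  have d: "(gb n has_real_derivative (\<Sum>i=0..n. (of_nat i * t^(i-1)) / fact i * fps_nth G (n - i))) (at t)"
    unfolding gb_def[abs_def]
    by (auto intro!: derivative_eq_intros)
  show ?thesis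
  proof (cases n)
    case 0 then show ?thesis using d by simp
  next
    case (Suc m)
    have "(\<Sum>i=0..n. (of_nat i * t^(i-1)) / fact i * fps_nth G (n - i)) = gb m t"
    proof -
      have e: "\<And>i c. real (Suc i) * t ^ i * c / fact (Suc i) = t^i * c / (fact i::real)"
        by (simp add: divide_simps del: of_nat_Suc)
      show ?thesis
        unfolding Suc gb_def sum.atLeast0_atMost_Suc_shift
        by (simp add: e del: of_nat_Suc fact_Suc)
    qed
    then show ?thesis using d Suc by simp
  qed
qed


definition ps :: "nat list \<Rightarrow> nat \<Rightarrow> nat" where "ps ms j = sum_list (take j ms)"

definition Sp :: "nat \<Rightarrow> nat list set" where
  "Sp r = {ns. length ns = r \<and> ps ns r = r \<and> (\<forall>j\<le>r. j \<le> ps ns j)}"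

lemma ps_split: "ps b (k + j) = ps b k + ps (drop k b) j"
  unfolding ps_def by (simp add: take_add)

lemma ps_mono: "j \<le> j' \<Longrightarrow> ps b j \<le> ps b j'"
  using ps_split[of b j "j' - j"] by simp

lemma ps_step: "k < length b \<Longrightarrow> ps b (Suc k) = ps b k + b ! k"
  unfolding ps_def by (simp add: take_Suc_conv_app_nth)

lemma ps_take: "ps (take m b) j = ps b (min j m)"
  unfolding ps_def by (simp add: min.commute)

lemma ps_len: "length b \<le> j \<Longrightarrow> ps b j = sum_list b"
  unfolding ps_def by simp

lemma ps_0[simp]: "ps b 0 = 0"
  unfolding ps_def by simp

lemma ps_app: "ps (p @ x # q) j =
   (if j \<le> length p then ps p j else sum_list p + x + ps q (j - length p - 1))"
  unfolding ps_def by (cases "j - length p") auto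

lemma ps_inc: "i < length ms \<Longrightarrow> ps (ms[i := ms!i + 1]) j = ps ms j + (if i < j then 1 else 0)"
proof (induction ms arbitrary: i j)
  case Nil then show ?case by simp
next
  case (Cons a ms)
  show ?case
  proof (cases j)
    case 0 then show ?thesis by simp
  next
    case (Suc j')
    show ?thesis
    proof (cases i)
      case 0 then show ?thesis using Suc by (simp add: ps_def)
    next
      case (Suc i')
      have "ps (ms[i' := ms!i' + 1]) j' = ps ms j' + (if i' < j' then 1 else 0)"
        using Cons Suc by simp
      then show ?thesis using Suc \<open>j = Suc j'\<close> by (simp add: ps_def)
    qed
  qed
qed

lemma S_eq: "S_set r = Sp r"
proof (intro set_eqI iffI)
  fix ns assume "ns \<in> S_set r"
  hence L: "length ns = r" and T: "sum_list ns = r"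
    and D: "\<And>j. 1 \<le> j \<Longrightarrow> j < r \<Longrightarrow> sum_list (drop j ns) \<le> r - j"
    unfolding S_set_def by auto
  have sp: "ps ns j + sum_list (drop j ns) = r" for j
    unfolding ps_def using T by (metis append_take_drop_id sum_list_append)
  have "j \<le> ps ns j" if "j \<le> r" for j
  proof (cases "1 \<le> j \<and> j < r")
    case True then show ?thesis using D[of j] sp[of j] by linarith
  next
    case False
    then have "j = 0 \<or> j = r" using that by linarith
    then show ?thesis using L T ps_len[of ns j] by auto
  qed
  moreover have "ps ns r = r" using L T ps_len[of ns r] by simp
  ultimately show "ns \<in> Sp r" using L unfolding Sp_def by auto
next
  fix ns assume "ns \<in> Sp r"
  hence L: "length ns = r" and T: "ps ns r = r" and D: "\<And>j. j \<le> r \<Longrightarrow> j \<le> ps ns j"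
    unfolding Sp_def by auto
  have T': "sum_list ns = r" using T ps_len[of ns r] L by simp
  have sp: "ps ns j + sum_list (drop j ns) = r" for j
    unfolding ps_def using T' by (metis append_take_drop_id sum_list_append)
  show "ns \<in> S_set r" unfolding S_set_def using L T' D sp
    by (auto simp: le_diff_conv2) (metis add_le_cancel_right le_trans nat_less_le sp add.commute D)
qed

definition M :: "nat \<Rightarrow> nat \<Rightarrow> nat list set" where
  "M l r = {ms. length ms = r \<and> ps ms r = r - 1 \<and> (\<forall>j\<le>r. (if j < l then j else j - 1) \<le> ps ms j)}"

lemma inc_iff:
  assumes "length b = r" "1 \<le> l" "l \<le> r"
  shows "b[l-1 := b!(l-1) + 1] \<in> Sp r \<longleftrightarrow> b \<in> M l r"
proof -
  have e: "ps (b[l-1 := b!(l-1) + 1]) j = ps b j + (if l \<le> j then 1 else 0)" for j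
    using ps_inc[of "l-1" b j] assms by (auto split: if_splits)
  have A: "(\<forall>j\<le>r. j \<le> ps b j + (if l \<le> j then 1 else 0)) \<longleftrightarrow>
           (\<forall>j\<le>r. (if j < l then j else j - 1) \<le> ps b j)"
    using assms(2) by (intro iff_allI) auto
  have B: "ps b r + 1 = r \<longleftrightarrow> ps b r = r - 1" using assms by auto
  show ?thesis unfolding Sp_def M_def using assms e A B by auto
qed

lemma step1:
  assumes "1 \<le> l" "l \<le> r"
  shows "(\<Sum>ns\<in>{ns\<in>Sp r. 1 \<le> ns!(l-1)}. F (ns[l-1 := ns!(l-1) - 1])) = (\<Sum>ms\<in>M l r. F ms)"
proof (rule sum.reindex_bij_witness[where i = "\<lambda>ms. ms[l-1 := ms!(l-1)+1]"
                                     and j = "\<lambda>ns. ns[l-1 := ns!(l-1) - 1]"])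
  fix a assume a: "a \<in> {ns\<in>Sp r. 1 \<le> ns!(l-1)}"
  hence la: "length a = r" unfolding Sp_def by auto
  show ia: "a[l - 1 := a ! (l - 1) - 1, l - 1 := a[l - 1 := a ! (l - 1) - 1] ! (l - 1) + 1] = a"
    using a la assms by auto
  show "a[l - 1 := a ! (l - 1) - 1] \<in> M l r"
    using inc_iff[of "a[l - 1 := a ! (l - 1) - 1]" r l] ia a la assms by auto
next
  fix b assume b: "b \<in> M l r"
  hence lb: "length b = r" unfolding M_def by auto
  show "b[l - 1 := b ! (l - 1) + 1, l - 1 := b[l - 1 := b ! (l - 1) + 1] ! (l - 1) - 1] = b"
    using lb assms by auto
  show "b[l - 1 := b ! (l - 1) + 1] \<in> {ns \<in> Sp r. 1 \<le> ns ! (l - 1)}"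
    using inc_iff[of b r l] b lb assms by auto
qed simp

definition kk :: "nat \<Rightarrow> nat list \<Rightarrow> nat" where
  "kk l ms = (LEAST j. l \<le> j \<and> ps ms j = j - 1)"

lemma kk_props:
  assumes "1 \<le> l" "l \<le> r" "ms \<in> M l r"
  shows "l \<le> kk l ms" "kk l ms \<le> r" "ps ms (kk l ms) = kk l ms - 1"
        "\<And>j. j < kk l ms \<Longrightarrow> j \<le> ps ms j" "ms ! (kk l ms - 1) = 0"
proof -
  have L: "length ms = r" and T: "ps ms r = r - 1"
    and D: "\<And>j. j \<le> r \<Longrightarrow> (if j < l then j else j - 1) \<le> ps ms j"
    using assms(3) unfolding M_def by auto
  have Pr: "l \<le> r \<and> ps ms r = r - 1" using assms T by auto
  show k1: "l \<le> kk l ms" and k2: "ps ms (kk l ms) = kk l ms - 1"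
    unfolding kk_def using LeastI[of "\<lambda>j. l \<le> j \<and> ps ms j = j - 1", OF Pr] by auto
  show k3: "kk l ms \<le> r" unfolding kk_def using Least_le[of "\<lambda>j. l \<le> j \<and> ps ms j = j - 1", OF Pr] .
  show k4: "j \<le> ps ms j" if "j < kk l ms" for j
  proof (cases "j < l")
    case True then show ?thesis using D[of j] k3 that by auto
  next
    case False
    have "ps ms j \<noteq> j - 1" using not_less_Least[of j "\<lambda>j. l \<le> j \<and> ps ms j = j - 1"] that False
      unfolding kk_def by auto
    then show ?thesis using D[of j] k3 that False by auto
  qed
  have kpos: "kk l ms - 1 < length ms" "Suc (kk l ms - 1) = kk l ms" using k1 k3 L assms(1) by auto
  have "ps ms (kk l ms) = ps ms (kk l ms - 1) + ms ! (kk l ms - 1)"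
    using ps_step[OF kpos(1)] kpos(2) by simp
  moreover have "kk l ms - 1 \<le> ps ms (kk l ms - 1)" using k4[of "kk l ms - 1"] k1 assms(1) by auto
  ultimately show "ms ! (kk l ms - 1) = 0" using k2 by linarith
qed

lemma kk_app:
  assumes "1 \<le> l" "l \<le> k" "k \<le> r" "p \<in> Sp (k-1)" "q \<in> Sp (r-k)"
  shows "kk l (p @ 0 # q) = k"
proof -
  have lp: "length p = k - 1" and sp: "sum_list p = k - 1" and Dp: "\<And>j. j \<le> k-1 \<Longrightarrow> j \<le> ps p j"
    using assms(4) ps_len[of p "k-1"] unfolding Sp_def by auto
  show ?thesis unfolding kk_def
  proof (rule Least_equality)
    show "l \<le> k \<and> ps (p @ 0 # q) k = k - 1" using assms lp sp by (simp add: ps_app)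
  next
    fix y assume y: "l \<le> y \<and> ps (p @ 0 # q) y = y - 1"
    show "k \<le> y"
    proof (rule ccontr)
      assume "\<not> k \<le> y"
      hence "y \<le> length p" using lp by auto
      hence "ps (p @ 0 # q) y = ps p y" by (simp add: ps_app)
      moreover have "y \<le> ps p y" using Dp \<open>y \<le> length p\<close> lp by auto
      ultimately show False using y assms(1) by auto
    qed
  qed
qed

lemma app_in_M:
  assumes "1 \<le> l" "l \<le> k" "k \<le> r" "p \<in> Sp (k-1)" "q \<in> Sp (r-k)"
  shows "p @ 0 # q \<in> M l r"
proof -
  have lp: "length p = k - 1" and sp: "sum_list p = k - 1" and Dp: "\<And>j. j \<le> k-1 \<Longrightarrow> j \<le> ps p j"
    using assms(4) ps_len[of p "k-1"] unfolding Sp_def by auto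
  have lq: "length q = r - k" and sq: "ps q (r-k) = r - k" and Dq: "\<And>j. j \<le> r-k \<Longrightarrow> j \<le> ps q j"
    using assms(5) unfolding Sp_def by auto
  have len: "length (p @ 0 # q) = r" using lp lq assms by auto
  have tot: "ps (p @ 0 # q) r = r - 1"
    using lp sp sq assms by (simp add: ps_app)
  have "(if j < l then j else j - 1) \<le> ps (p @ 0 # q) j" if "j \<le> r" for j
  proof (cases "j \<le> k - 1")
    case True then show ?thesis using Dp[of j] lp by (auto simp add: ps_app)
  next
    case False
    hence "ps (p @ 0 # q) j = k - 1 + ps q (j - k)" using lp sp assms(1,2) by (simp add: ps_app)
    moreover have "j - k \<le> ps q (j - k)" using Dq[of "j-k"] that by auto
    ultimately show ?thesis using False assms by auto
  qed
  then show ?thesis unfolding M_def using len tot by auto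
qed

lemma step2:
  assumes "1 \<le> l" "l \<le> r"
  shows "(\<Sum>x\<in>(SIGMA k:{l..r}. Sp (k-1) \<times> Sp (r-k)). F (fst (snd x) @ 0 # snd (snd x)))
         = (\<Sum>ms\<in>M l r. F ms)"
proof (rule sum.reindex_bij_witness[where j = "\<lambda>x. fst (snd x) @ 0 # snd (snd x)"
       and i = "\<lambda>ms. (kk l ms, take (kk l ms - 1) ms, drop (kk l ms) ms)"])
  fix a assume a: "a \<in> (SIGMA k:{l..r}. Sp (k-1) \<times> Sp (r-k))"
  then obtain k p q where aa: "a = (k, p, q)" "l \<le> k" "k \<le> r" "p \<in> Sp (k-1)" "q \<in> Sp (r-k)"
    by auto
  have lp: "length p = k - 1" using aa unfolding Sp_def by auto
  have k1: "Suc (k - 1) = k" using aa assms by auto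
  show "(kk l (fst (snd a) @ 0 # snd (snd a)),
          take (kk l (fst (snd a) @ 0 # snd (snd a)) - 1) (fst (snd a) @ 0 # snd (snd a)),
          drop (kk l (fst (snd a) @ 0 # snd (snd a))) (fst (snd a) @ 0 # snd (snd a))) = a"
  proof -
    have "k - length p = Suc 0" using lp k1 by auto
    then show ?thesis using kk_app[OF assms(1) aa(2-5)] aa(1) lp by simp
  qed
  show "fst (snd a) @ 0 # snd (snd a) \<in> M l r" using app_in_M[OF assms(1) aa(2-5)] aa(1) by simp
next
  fix b assume b: "b \<in> M l r"
  note kp = kk_props[OF assms b]
  have L: "length b = r" and T: "ps b r = r - 1"
    and D: "\<And>j. j \<le> r \<Longrightarrow> (if j < l then j else j - 1) \<le> ps b j"
    using b unfolding M_def by auto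
  define k where "k = kk l b"
  have k1: "k - 1 < length b" "Suc (k - 1) = k" using kp(1,2) assms L unfolding k_def by auto
  show "fst (snd (kk l b, take (kk l b - 1) b, drop (kk l b) b)) @ 0 # snd (snd (kk l b, take (kk l b - 1) b, drop (kk l b) b)) = b"
    using id_take_nth_drop[OF k1(1)] kp(5) k1(2) unfolding k_def[symmetric] by simp
  have "ps b (k - 1) \<le> ps b k" using ps_mono by simp
  hence pk1: "ps b (k - 1) = k - 1" using kp(3) kp(4)[of "k-1"] k1 unfolding k_def[symmetric] by linarith
  have kk4: "\<And>j. j < k \<Longrightarrow> j \<le> ps b j" using kp(4) unfolding k_def by blast
  have tk: "take (k - 1) b \<in> Sp (k - 1)"
  proof -
    have "length (take (k - 1) b) = k - 1" using L k1 by auto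
    moreover have "ps (take (k - 1) b) (k - 1) = k - 1" using pk1 by (simp add: ps_take)
    moreover have "j \<le> ps (take (k - 1) b) j" if "j \<le> k - 1" for j
      using kk4[of j] that k1 by (simp add: ps_take min_def)
    ultimately show ?thesis unfolding Sp_def by auto
  qed
  have dk: "drop k b \<in> Sp (r - k)"
  proof -
    have "j \<le> ps (drop k b) j" if "j \<le> r - k" for j
    proof -
      have "ps b (k + j) = ps b k + ps (drop k b) j" by (rule ps_split)
      moreover have "k + j - 1 \<le> ps b (k + j)" using D[of "k+j"] that kp(1,2) unfolding k_def[symmetric] by (auto split: if_splits)
      ultimately show ?thesis using kp(3) k1 unfolding k_def[symmetric] by linarith
    qed
    moreover have "ps (drop k b) (r - k) = r - k"
      using ps_split[of b k "r - k"] kp(2,3) T k1 unfolding k_def[symmetric] by (auto; linarith)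
    ultimately show ?thesis unfolding Sp_def using L by auto
  qed
  show "(kk l b, take (kk l b - 1) b, drop (kk l b) b) \<in> (SIGMA k:{l..r}. Sp (k-1) \<times> Sp (r-k))"
    using tk dk kp(1,2) unfolding k_def by auto
qed simp



lemma finite_S: "finite (S_set r)"
proof -
  have "S_set r \<subseteq> {xs. set xs \<subseteq> {..r} \<and> length xs = r}"
    unfolding S_set_def using member_le_sum_list by fastforce
  moreover have "finite {xs. set xs \<subseteq> {..r} \<and> length xs = r}"
    by (rule finite_lists_length_eq) simp
  ultimately show ?thesis by (rule finite_subset)
qed

lemma prod_app:
  "(\<Prod>j<length (p @ x # q). h j ((p @ x # q) ! j)) =
   (\<Prod>j<length p. h j (p ! j)) * h (length p) x * (\<Prod>j<length q. h (Suc (length p) + j) (q ! j))"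
proof (induction p arbitrary: h)
  case Nil
  show ?case by (simp add: prod.lessThan_Suc_shift del: prod.lessThan_Suc)
next
  case (Cons a p)
  have "(\<Prod>j<length ((a # p) @ x # q). h j (((a # p) @ x # q) ! j)) =
        h 0 a * (\<Prod>j<length (p @ x # q). h (Suc j) ((p @ x # q) ! j))"
    by (simp add: prod.lessThan_Suc_shift del: prod.lessThan_Suc)
  also have "\<dots> = h 0 a * ((\<Prod>j<length p. h (Suc j) (p ! j)) * h (Suc (length p)) x *
       (\<Prod>j<length q. h (Suc (Suc (length p) + j)) (q ! j)))"
    using Cons[of "\<lambda>j. h (Suc j)"] by simp
  also have "\<dots> = (\<Prod>j<length (a # p). h j ((a # p) ! j)) * h (length (a # p)) x *
       (\<Prod>j<length q. h (Suc (length (a # p)) + j) (q ! j))"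
    by (simp add: prod.lessThan_Suc_shift mult.assoc del: prod.lessThan_Suc)
  finally show ?case .
qed

lemma lemmaA:
  fixes h :: "nat \<Rightarrow> nat \<Rightarrow> real"
  assumes h0: "\<And>j. h j 0 = 1" and l: "1 \<le> l" "l \<le> r"
  shows "(\<Sum>ns\<in>{ns\<in>S_set r. 1 \<le> ns!(l-1)}. \<Prod>j<r. h j (ns[l-1 := ns!(l-1) - 1] ! j)) =
         (\<Sum>k=l..r. (\<Sum>p\<in>S_set (k-1). \<Prod>j<k-1. h j (p!j)) * (\<Sum>q\<in>S_set (r-k). \<Prod>j<r-k. h (k+j) (q!j)))"
proof -
  let ?H = "\<lambda>ms. \<Prod>j<r. h j (ms ! j)"
  have "(\<Sum>ns\<in>{ns\<in>S_set r. 1 \<le> ns!(l-1)}. ?H (ns[l-1 := ns!(l-1) - 1])) = (\<Sum>ms\<in>M l r. ?H ms)"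
    unfolding S_eq by (rule step1[OF l])
  also have "\<dots> = (\<Sum>x\<in>(SIGMA k:{l..r}. Sp (k-1) \<times> Sp (r-k)). ?H (fst (snd x) @ 0 # snd (snd x)))"
    by (rule step2[OF l, symmetric])
  also have "\<dots> = (\<Sum>x\<in>(SIGMA k:{l..r}. Sp (k-1) \<times> Sp (r-k)).
      (\<Prod>j<fst x - 1. h j (fst (snd x) ! j)) * (\<Prod>j<r - fst x. h (fst x + j) (snd (snd x) ! j)))"
  proof (rule sum.cong[OF refl])
    fix x assume "x \<in> (SIGMA k:{l..r}. Sp (k-1) \<times> Sp (r-k))"
    then obtain k p q where x: "x = (k, p, q)" "l \<le> k" "k \<le> r" "p \<in> Sp (k-1)" "q \<in> Sp (r-k)" by auto
    have lp: "length p = k - 1" and lq: "length q = r - k" using x unfolding Sp_def by auto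
    have lr: "length (p @ 0 # q) = r" using lp lq x l by auto
    have sk: "Suc (k - 1) = k" using x l by auto
    show "?H (fst (snd x) @ 0 # snd (snd x)) =
      (\<Prod>j<fst x - 1. h j (fst (snd x) ! j)) * (\<Prod>j<r - fst x. h (fst x + j) (snd (snd x) ! j))"
      using prod_app[of h p 0 q] lr lp lq sk x(1) h0 by simp
  qed
  also have "\<dots> = (\<Sum>k=l..r. \<Sum>pq\<in>Sp (k-1) \<times> Sp (r-k).
      (\<Prod>j<k - 1. h j (fst pq ! j)) * (\<Prod>j<r - k. h (k + j) (snd pq ! j)))"
    by (subst sum.Sigma) (auto simp: finite_S[unfolded S_eq] split_def)
  also have "\<dots> = (\<Sum>k=l..r. (\<Sum>p\<in>Sp (k-1). \<Prod>j<k-1. h j (p!j)) * (\<Sum>q\<in>Sp (r-k). \<Prod>j<r-k. h (k+j) (q!j)))"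
    by (simp add: sum_product sum.cartesian_product split_def)
  finally show ?thesis unfolding S_eq .
qed

lemma C1_gb: "C1 as = (-1) ^ length as * (\<Sum>ns\<in>S_set (length as). \<Prod>j<length as. gb (ns!j) (as!j))"
  unfolding C1_def bern_gb ..

definition Dv :: "real list \<Rightarrow> nat \<Rightarrow> real" where
  "Dv as l = (\<Sum>ns\<in>{ns\<in>S_set (length as). 1 \<le> ns!(l-1)}.
      \<Prod>j<length as. gb (ns[l-1 := ns!(l-1) - 1] ! j) (as!j))"

lemma Dv_eq:
  assumes "1 \<le> l" "l \<le> length as"
  shows "(-1) ^ length as * Dv as l = - (\<Sum>k = l..length as. C1 (take (k - 1) as) * C1 (drop k as))"
proof -
  define r where "r = length as"
  have "Dv as l = (\<Sum>k=l..r. (\<Sum>p\<in>S_set (k-1). \<Prod>j<k-1. gb (p!j) (as!j)) *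
                     (\<Sum>q\<in>S_set (r-k). \<Prod>j<r-k. gb (q!j) (as!(k+j))))"
    unfolding Dv_def r_def[symmetric]
    by (rule lemmaA[where h = "\<lambda>j n. gb n (as!j)"]) (use assms gb0 r_def in auto)
  also have "\<dots> = (\<Sum>k=l..r. ((-1)^(k-1) * C1 (take (k - 1) as)) * ((-1)^(r-k) * C1 (drop k as)))"
  proof (rule sum.cong[OF refl])
    fix k assume k: "k \<in> {l..r}"
    have lt: "length (take (k-1) as) = k - 1" and ld: "length (drop k as) = r - k" using k r_def by auto
    have A: "(\<Sum>p\<in>S_set (k-1). \<Prod>j<k-1. gb (p!j) (as!j)) = (-1)^(k-1) * C1 (take (k - 1) as)"
      unfolding C1_gb lt by (auto intro!: sum.cong prod.cong)
    have B: "(\<Sum>q\<in>S_set (r-k). \<Prod>j<r-k. gb (q!j) (as!(k+j))) = (-1)^(r-k) * C1 (drop k as)"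
      unfolding C1_gb ld using k r_def by (auto intro!: sum.cong prod.cong)
    show "(\<Sum>p\<in>S_set (k-1). \<Prod>j<k-1. gb (p!j) (as!j)) * (\<Sum>q\<in>S_set (r-k). \<Prod>j<r-k. gb (q!j) (as!(k+j)))
       = ((-1)^(k-1) * C1 (take (k - 1) as)) * ((-1)^(r-k) * C1 (drop k as))"
      using A B by simp
  qed
  finally have D: "Dv as l = \<dots>" .
  have sgn: "(-1::real)^r * ((-1)^(k-1) * x * ((-1)^(r-k) * y)) = - (x * y)" if "k \<in> {l..r}" for k x y
  proof -
    have "(-1::real)^(k-1) * (-1)^(r-k) = (-1)^(r-1)" using that assms
      by (metis power_add le_add_diff_inverse2 le_diff_iff' atLeastAtMost_iff le_trans add.commute diff_add_inverse Nat.add_diff_assoc2 one_le_numeral)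
    moreover have "(-1::real)^r = - ((-1)^(r-1))" using that assms
      by (metis power_Suc Suc_diff_1 le_trans mult_minus1 atLeastAtMost_iff less_le_trans zero_less_one le_less)
    ultimately show ?thesis by (simp add: algebra_simps)
  qed
  show ?thesis unfolding D r_def[symmetric] sum_distrib_left sum_negf[symmetric]
    by (intro sum.cong refl sgn)
qed



lemma collapse:
  assumes "i < length ns"
  shows "(if ns!i = 0 then 0 else gb (ns!i - 1) (w i)) * (\<Prod>y\<in>{..<length ns} - {i}. gb (ns!y) (w y))
       = (if 1 \<le> ns!i then \<Prod>j<length ns. gb (ns[i := ns!i - 1] ! j) (w j) else 0)"
proof (cases "ns!i = 0")
  case True then show ?thesis by simp
next
  case False
  have "(\<Prod>j<length ns. gb (ns[i := ns!i - 1] ! j) (w j)) =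
        gb (ns[i := ns!i - 1] ! i) (w i) * (\<Prod>j\<in>{..<length ns} - {i}. gb (ns[i := ns!i - 1] ! j) (w j))"
    by (rule prod.remove) (use assms in auto)
  also have "\<dots> = gb (ns!i - 1) (w i) * (\<Prod>y\<in>{..<length ns} - {i}. gb (ns!y) (w y))"
    using assms by (auto intro!: prod.cong)
  finally show ?thesis using False by simp
qed

lemma sum_delta_mult:
  fixes P :: "nat \<Rightarrow> real"
  assumes "i < r"
  shows "(\<Sum>x<r. (if x = i then c else 0) * P x) = c * P i"
  using assms by (subst sum.remove[of _ i]) auto

lemma deriv1:
  assumes "1 \<le> l" "l \<le> length as"
  shows "((\<lambda>t. C1 (as[l - 1 := t])) has_real_derivative (-1) ^ length as * Dv as l) (at (as ! (l - 1)))"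
proof -
  define r where "r = length as"
  have l1: "l - 1 < r" using assms r_def by auto
  have fe: "(\<lambda>t. C1 (as[l - 1 := t])) =
      (\<lambda>t. (-1) ^ r * (\<Sum>ns\<in>S_set r. \<Prod>j<r. gb (ns!j) (as[l - 1 := t] ! j)))"
    by (rule ext) (simp add: C1_gb r_def)
  have pd: "((\<lambda>t. \<Prod>j<r. gb (ns!j) (as[l - 1 := t] ! j)) has_real_derivative
            (if 1 \<le> ns!(l-1) then \<Prod>j<r. gb (ns[l-1 := ns!(l-1) - 1] ! j) (as!j) else 0)) (at (as ! (l - 1)))"
    if ns: "ns \<in> S_set r" for ns
  proof -
    have ln: "length ns = r" using ns unfolding S_set_def by auto
    define c where "c = (if ns!(l-1) = 0 then 0 else gb (ns!(l-1) - 1) (as!(l-1)))"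
    let ?f' = "\<lambda>x. if x = l - 1 then c else 0"
    have "((\<lambda>u. \<Prod>j<r. gb (ns!j) (as[l - 1 := u] ! j)) has_real_derivative
           (\<Sum>x<r. ?f' x * (\<Prod>y\<in>{..<r}-{x}. gb (ns!y) (as[l - 1 := as!(l-1)] ! y)))) (at (as ! (l - 1)))"
    proof (rule has_field_derivative_prod)
      fix x assume x: "x \<in> {..<r}"
      show "((\<lambda>u. gb (ns!x) (as[l - 1 := u] ! x)) has_real_derivative ?f' x) (at (as ! (l - 1)))"
      proof (cases "x = l - 1")
        case True
        have e1: "(\<lambda>u. gb (ns!x) (as[l - 1 := u] ! x)) = gb (ns!x)" using True l1 r_def by auto
        have e2: "?f' x = (if ns!x = 0 then 0 else gb (ns!x - 1) (as!(l-1)))" using True c_def by simp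
        show ?thesis unfolding e1 e2 by (rule gb_deriv)
      next
        case False
        then show ?thesis by simp
      qed
    qed
    also have "(\<Sum>x<r. ?f' x * (\<Prod>y\<in>{..<r}-{x}. gb (ns!y) (as[l - 1 := as!(l-1)] ! y))) =
        c * (\<Prod>y\<in>{..<r}-{l-1}. gb (ns!y) (as ! y))"
      unfolding list_update_id by (rule sum_delta_mult[OF l1])
    also have "\<dots> = (if 1 \<le> ns!(l-1) then \<Prod>j<r. gb (ns[l-1 := ns!(l-1) - 1] ! j) (as!j) else 0)"
      using collapse[of "l-1" ns "\<lambda>j. as!j"] l1 ln unfolding c_def by simp
    finally show ?thesis .
  qed
  have "((\<lambda>t. (-1) ^ r * (\<Sum>ns\<in>S_set r. \<Prod>j<r. gb (ns!j) (as[l - 1 := t] ! j))) has_real_derivative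
        (-1) ^ r * (\<Sum>ns\<in>S_set r. (if 1 \<le> ns!(l-1) then \<Prod>j<r. gb (ns[l-1 := ns!(l-1) - 1] ! j) (as!j) else 0)))
        (at (as ! (l - 1)))"
    by (intro DERIV_cmult DERIV_sum pd)
  moreover have "(\<Sum>ns\<in>S_set r. (if 1 \<le> ns!(l-1) then \<Prod>j<r. gb (ns[l-1 := ns!(l-1) - 1] ! j) (as!j) else 0))
       = Dv as l"
    unfolding Dv_def r_def[symmetric] by (rule sum.inter_filter[symmetric]) (rule finite_S)
  ultimately show ?thesis unfolding fe r_def by simp
qed


lemma deriv2:
  shows "(C1diag r has_real_derivative (\<Sum>l=1..r. (-1) ^ r * Dv (replicate r a) l)) (at a)"
proof -
  have fe: "C1diag r = (\<lambda>t. (-1) ^ r * (\<Sum>ns\<in>S_set r. \<Prod>j<r. gb (ns!j) t))"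
    by (rule ext) (simp add: C1diag_def C1_gb)
  have pd: "((\<lambda>t. \<Prod>j<r. gb (ns!j) t) has_real_derivative
            (\<Sum>x<r. if 1 \<le> ns!x then \<Prod>j<r. gb (ns[x := ns!x - 1] ! j) a else 0)) (at a)"
    if ns: "ns \<in> S_set r" for ns
  proof -
    have ln: "length ns = r" using ns unfolding S_set_def by auto
    let ?f' = "\<lambda>x. if ns!x = 0 then 0 else gb (ns!x - 1) a"
    have "((\<lambda>u. \<Prod>j<r. gb (ns!j) u) has_real_derivative
           (\<Sum>x<r. ?f' x * (\<Prod>y\<in>{..<r}-{x}. gb (ns!y) a))) (at a)"
      by (rule has_field_derivative_prod) (rule gb_deriv)
    also have "(\<Sum>x<r. ?f' x * (\<Prod>y\<in>{..<r}-{x}. gb (ns!y) a)) =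
        (\<Sum>x<r. if 1 \<le> ns!x then \<Prod>j<r. gb (ns[x := ns!x - 1] ! j) a else 0)"
      using collapse[of _ ns "\<lambda>_. a"] ln by (intro sum.cong refl) simp
    finally show ?thesis .
  qed
  have "(C1diag r has_real_derivative
        (-1) ^ r * (\<Sum>ns\<in>S_set r. \<Sum>x<r. if 1 \<le> ns!x then \<Prod>j<r. gb (ns[x := ns!x - 1] ! j) a else 0)) (at a)"
    unfolding fe by (intro DERIV_cmult DERIV_sum pd)
  moreover have "(-1) ^ r * (\<Sum>ns\<in>S_set r. \<Sum>x<r. if 1 \<le> ns!x then \<Prod>j<r. gb (ns[x := ns!x - 1] ! j) a else 0)
      = (\<Sum>l=1..r. (-1) ^ r * Dv (replicate r a) l)"
  proof -
    have "Dv (replicate r a) (Suc x) = (\<Sum>ns\<in>S_set r. if 1 \<le> ns!x then \<Prod>j<r. gb (ns[x := ns!x - 1] ! j) a else 0)"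
      for x
      unfolding Dv_def length_replicate
      by (subst sum.inter_filter[symmetric]) (auto simp: finite_S intro!: sum.cong prod.cong)
    then have "(\<Sum>l=1..r. (-1) ^ r * Dv (replicate r a) l) = (-1) ^ r * (\<Sum>x<r. \<Sum>ns\<in>S_set r. if 1 \<le> ns!x then \<Prod>j<r. gb (ns[x := ns!x - 1] ! j) a else 0)"
      by (simp add: sum.atLeast1_atMost_eq sum_distrib_left)
    also have "\<dots> = (-1) ^ r * (\<Sum>ns\<in>S_set r. \<Sum>x<r. if 1 \<le> ns!x then \<Prod>j<r. gb (ns[x := ns!x - 1] ! j) a else 0)"
      by (subst sum.swap) rule
    finally show ?thesis by simp
  qed
  ultimately show ?thesis by simp
qed

lemma dsum: "(\<Sum>l=1..r. \<Sum>k=l..r. f k) = (\<Sum>k=1..r. real k * f k :: real)"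
proof (induction r)
  case 0 then show ?case by simp
next
  case (Suc r)
  have "(\<Sum>l=1..Suc r. \<Sum>k=l..Suc r. f k) = (\<Sum>l=1..r. \<Sum>k=l..Suc r. f k) + f (Suc r)"
    by simp
  also have "(\<Sum>l=1..r. \<Sum>k=l..Suc r. f k) = (\<Sum>l=1..r. (\<Sum>k=l..r. f k) + f (Suc r))"
    by (intro sum.cong refl) simp
  also have "\<dots> = (\<Sum>k=1..r. real k * f k) + real r * f (Suc r)"
    using Suc by (simp add: sum.distrib)
  finally show ?case by (simp add: algebra_simps)
qed


lemma part1:
  assumes "1 \<le> l \<and> l \<le> length as"
  shows "((\<lambda>t. C1 (as[l - 1 := t])) has_real_derivative
              (- (\<Sum>k = l..length as. C1 (take (k - 1) as) * C1 (drop k as))))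
             (at (as ! (l - 1)))"
  using deriv1[of l as] Dv_eq[of l as] assms by simp

lemma part2:
  assumes r: "1 \<le> r"
  shows "(C1diag r has_real_derivative
              (- (\<Sum>l = 1..r. \<Sum>k = l..r. C1diag (k - 1) a * C1diag (r - k) a))) (at a)"
proof -
  have e: "(-1)^r * Dv (replicate r a) l = - (\<Sum>k=l..r. C1diag (k-1) a * C1diag (r-k) a)"
    if l: "l \<in> {1..r}" for l
  proof -
    have "(-1)^r * Dv (replicate r a) l = - (\<Sum>k = l..r. C1 (take (k - 1) (replicate r a)) * C1 (drop k (replicate r a)))"
      using Dv_eq[of l "replicate r a"] l by simp
    also have "\<dots> = - (\<Sum>k=l..r. C1diag (k-1) a * C1diag (r-k) a)"
      by (auto intro!: sum.cong simp: C1diag_def take_replicate min_def)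
    finally show ?thesis .
  qed
  have "(\<Sum>l=1..r. (-1) ^ r * Dv (replicate r a) l) = (\<Sum>l=1..r. - (\<Sum>k=l..r. C1diag (k-1) a * C1diag (r-k) a))"
    by (rule sum.cong[OF refl]) (rule e)
  then show ?thesis using deriv2[of r a] by (simp add: sum_negf)
qed

lemma part3:
  "(- (\<Sum>l = 1..r. \<Sum>k = l..r. C1diag (k - 1) a * C1diag (r - k) a))
              = - (\<Sum>k = 1..r. real k * C1diag (r - k) a * C1diag (k - 1) a)"
  using dsum[where r=r and f="\<lambda>k. C1diag (k - 1) a * C1diag (r - k) a"] by (simp add: mult_ac)

theorem lemma6p9:
  shows "(\<forall>(as :: real list) l. 1 \<le> l \<and> l \<le> length as \<longrightarrow>
           ((\<lambda>t. C1 (as[l - 1 := t])) has_real_derivative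
              (- (\<Sum>k = l..length as. C1 (take (k - 1) as) * C1 (drop k as))))
             (at (as ! (l - 1))))
       \<and> (\<forall>(r :: nat) (a :: real). 1 \<le> r \<longrightarrow>
           (C1diag r has_real_derivative
              (- (\<Sum>l = 1..r. \<Sum>k = l..r. C1diag (k - 1) a * C1diag (r - k) a))) (at a)
           \<and> (- (\<Sum>l = 1..r. \<Sum>k = l..r. C1diag (k - 1) a * C1diag (r - k) a))
              = - (\<Sum>k = 1..r. real k * C1diag (r - k) a * C1diag (k - 1) a))"
    using part1 part2 part3 by blast

end
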